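(* Let $k$ be a field, $V$ a $k$-vector space, and $\varphi\in\operatorname{End}_k(V)$ a finite potent endomorphism with index $i(\varphi)=r$ and AST-decomposition $V=W_\varphi\oplus U_\varphi$. Fix a Jordan basis of $U_\varphi$ induced by $\varphi|_{U_\varphi}$, given by pairwise disjoint index sets $S_1,\dots,S_r$, $\overline S=S_1\cup\dots\cup S_r$, and vectors $v_{s}\in U_\varphi$ ($s\in\overline S$) such that, writing $s_h$ for an element of $S_h$, one has $\varphi^{h}(v_{s_h})=0$ and $\bigcup_{h=1}^r\bigcup_{s_h\in S_h}\{v_{s_h},\varphi(v_{s_h}),\dots,\varphi^{h-1}(v_{s_h})\}$ is a basis of $U_\varphi$. Then the generalized inverses $g\in\operatorname{End}_k(U_\varphi)$ of $\varphi|_{U_\varphi}$ are exactly the linear maps determined, for each $1\le h\le r$ and $s_h\in S_h$, by $$g(\varphi^i(v_{s_h}))=\begin{cases}\varphi^{i-1}(v_{s_h})+\sum_{s_t\in\overline S}\lambda^{i}_{s_h,s_t}\,\varphi^{t-1}(v_{s_t}) & \text{if } 1\le i\le h-1,\\ \sum_{s_l\in\overline S}\sum_{0\le j\le l-1}\alpha^{j}_{s_h,s_l}\,\varphi^{j}(v_{s_l}) & \text{if } i=0,\end{cases}$$ where $\lambda^{i}_{s_h,s_t},\alpha^{j}_{s_h,s_l}\in k$ are arbitrary scalars such that, for each $s_h$ and $i$, $\lambda^{i}_{s_h,s_t}=0$ for all but finitely many $s_t$, and for each $s_h$, $\alpha^{j}_{s_h,s_l}=0$ for all but finitely many pairs $(s_l,j)$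 (here $t$, $l$ denote the indices with $s_t\in S_t$, $s_l\in S_l$).
   Context: An endomorphism $\varphi$ of a $k$-vector space $V$ is finite potent if $\varphi^n(V)$ is finite dimensional for some $n$. For such $\varphi$, the AST-decomposition is $V=U_\varphi\oplus W_\varphi$ where $U_\varphi=\{v\in V: \varphi^m(v)=0 \text{ for some } m\}$ and $W_\varphi=\{v\in V: p(\varphi)(v)=0 \text{ for some } p(x)\in k[x] \text{ coprime to } x\}$; both are $\varphi$-invariant, $\varphi|_{U_\varphi}$ is nilpotent, $W_\varphi$ is finite dimensional and $\varphi|_{W_\varphi}$ is an automorphism. The index $i(\varphi)$ is the nilpotency order of $\varphi|_{U_\varphi}$. A generalized inverse of an endomorphism $g_0$ of $U$ is an endomorphism $g$ of $U$ with $g_0\circ g\circ g_0=g_0$. *)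

theory Defs
  imports Complex_Main
begin

definition finite_dim_set :: "('k::field \<Rightarrow> 'v::ab_group_add \<Rightarrow> 'v) \<Rightarrow> 'v set \<Rightarrow> bool" where
  "finite_dim_set scale A \<longleftrightarrow> (\<exists>B. finite B \<and> A \<subseteq> module.span scale B)"

definition finite_potent :: "('k::field \<Rightarrow> 'v::ab_group_add \<Rightarrow> 'v) \<Rightarrow> ('v \<Rightarrow> 'v) \<Rightarrow> bool" where
  "finite_potent scale \<phi> \<longleftrightarrow> Vector_Spaces.linear scale scale \<phi> \<and>
     (\<exists>n. finite_dim_set scale (range (\<phi> ^^ n)))"

definition U_part :: "('v::zero \<Rightarrow> 'v) \<Rightarrow> 'v set" where
  "U_part \<phi> = {v. \<exists>m. (\<phi> ^^ m) v = 0}"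

definition ast_index :: "('v::zero \<Rightarrow> 'v) \<Rightarrow> nat" where
  "ast_index \<phi> = (LEAST n. \<forall>u\<in>U_part \<phi>. (\<phi> ^^ n) u = 0)"

text \<open>g is a (k-linear) endomorphism of the subspace U (only its values on U matter).\<close>
definition endo_on :: "('k \<Rightarrow> 'v::ab_group_add \<Rightarrow> 'v) \<Rightarrow> 'v set \<Rightarrow> ('v \<Rightarrow> 'v) \<Rightarrow> bool" where
  "endo_on scale U g \<longleftrightarrow> g ` U \<subseteq> U \<and>
     (\<forall>x\<in>U. \<forall>y\<in>U. g (x + y) = g x + g y) \<and>
     (\<forall>c. \<forall>x\<in>U. g (scale c x) = scale c (g x))"

definition gen_inverse_on :: "'v set \<Rightarrow> ('v \<Rightarrow> 'v) \<Rightarrow> ('v \<Rightarrow> 'v) \<Rightarrow> bool" where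
  "gen_inverse_on U f g \<longleftrightarrow> (\<forall>u\<in>U. f (g (f u)) = f u)"

text \<open>Admissible scalars: lam i s s' = lambda^i_{s,s'}, alpha s s' j = alpha^j_{s,s'};
  finitely many nonzero as in the paper.\<close>
definition admissible_scalars ::
  "nat \<Rightarrow> (nat \<Rightarrow> 'i set) \<Rightarrow> (nat \<Rightarrow> 'i \<Rightarrow> 'i \<Rightarrow> 'k::zero) \<Rightarrow> ('i \<Rightarrow> 'i \<Rightarrow> nat \<Rightarrow> 'k) \<Rightarrow> bool" where
  "admissible_scalars r S lam alpha \<longleftrightarrow>
     (\<forall>h\<in>{1..r}. \<forall>s\<in>S h. \<forall>i\<in>{1..h-1}.
        finite {s'. \<exists>t\<in>{1..r}. s' \<in> S t \<and> lam i s s' \<noteq> 0}) \<and>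
     (\<forall>h\<in>{1..r}. \<forall>s\<in>S h.
        finite {(s', j). \<exists>l\<in>{1..r}. s' \<in> S l \<and> j < l \<and> alpha s s' j \<noteq> 0})"

definition jordan_ginv_formula ::
  "('k::field \<Rightarrow> 'v::ab_group_add \<Rightarrow> 'v) \<Rightarrow> ('v \<Rightarrow> 'v) \<Rightarrow> nat \<Rightarrow> (nat \<Rightarrow> 'i set) \<Rightarrow> ('i \<Rightarrow> 'v)
     \<Rightarrow> (nat \<Rightarrow> 'i \<Rightarrow> 'i \<Rightarrow> 'k) \<Rightarrow> ('i \<Rightarrow> 'i \<Rightarrow> nat \<Rightarrow> 'k) \<Rightarrow> ('v \<Rightarrow> 'v) \<Rightarrow> bool" where
  "jordan_ginv_formula scale \<phi> r S v lam alpha g \<longleftrightarrow>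
     (\<forall>h\<in>{1..r}. \<forall>s\<in>S h.
        (\<forall>i\<in>{1..h-1}. g ((\<phi> ^^ i) (v s)) =
            (\<phi> ^^ (i - 1)) (v s) +
            (\<Sum>t\<in>{1..r}. \<Sum>s'\<in>{s'\<in>S t. lam i s s' \<noteq> 0}.
                scale (lam i s s') ((\<phi> ^^ (t - 1)) (v s')))) \<and>
        g (v s) =
            (\<Sum>l\<in>{1..r}. \<Sum>s'\<in>{s'\<in>S l. \<exists>j<l. alpha s s' j \<noteq> 0}. \<Sum>j<l.
                scale (alpha s s' j) ((\<phi> ^^ j) (v s'))))"

end

theory Submission
  imports Defs
begin

context
  fixes scale :: "'k::field \<Rightarrow> 'v::ab_group_add \<Rightarrow> 'v"
    and \<phi> :: "'v \<Rightarrow> 'v" and r :: nat and S :: "nat \<Rightarrow> 'i set" and v :: "'i \<Rightarrow> 'v"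
  assumes vs: "vector_space scale"
    and disj: "\<forall>h1\<in>{1..r}. \<forall>h2\<in>{1..r}. h1 \<noteq> h2 \<longrightarrow> S h1 \<inter> S h2 = {}"
    and inj: "inj_on (\<lambda>(s, j). (\<phi> ^^ j) (v s)) {(s, j). \<exists>h\<in>{1..r}. s \<in> S h \<and> j < h}"
begin

lemma ht_unique: "h1 \<in> {1..r} \<Longrightarrow> h2 \<in> {1..r} \<Longrightarrow> s \<in> S h1 \<Longrightarrow> s \<in> S h2 \<Longrightarrow> h1 = h2"
  using disj by blast

lemma e_eq: "(\<phi> ^^ j1) (v s1) = (\<phi> ^^ j2) (v s2) \<Longrightarrow> h1 \<in> {1..r} \<Longrightarrow> s1 \<in> S h1 \<Longrightarrow> j1 < h1
  \<Longrightarrow> h2 \<in> {1..r} \<Longrightarrow> s2 \<in> S h2 \<Longrightarrow> j2 < h2 \<Longrightarrow> s1 = s2 \<and> j1 = j2"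
proof -
  assume a: "(\<phi> ^^ j1) (v s1) = (\<phi> ^^ j2) (v s2)" "h1 \<in> {1..r}" "s1 \<in> S h1" "j1 < h1"
    "h2 \<in> {1..r}" "s2 \<in> S h2" "j2 < h2"
  have "(s1, j1) = (s2, j2)"
    by (rule inj_onD[OF inj]) (use a in auto)
  then show ?thesis by simp
qed

lemma alpha_sum:
  fixes T :: "'v set" and u :: "'v \<Rightarrow> 'k"
  defines "I \<equiv> {(s, j). \<exists>h\<in>{1..r}. s \<in> S h \<and> j < h}"
  defines "e \<equiv> (\<lambda>(s, j). (\<phi> ^^ j) (v s))"
  defines "c \<equiv> (\<lambda>s' j. if (s', j) \<in> I \<and> e (s', j) \<in> T then u (e (s', j)) else 0)"
  assumes T: "finite T" "T \<subseteq> e ` I"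
  shows "finite {(s', j). \<exists>l\<in>{1..r}. s' \<in> S l \<and> j < l \<and> c s' j \<noteq> 0}"
    and "(\<Sum>l\<in>{1..r}. \<Sum>s'\<in>{s'\<in>S l. \<exists>j<l. c s' j \<noteq> 0}. \<Sum>j<l. scale (c s' j) ((\<phi> ^^ j) (v s')))
         = (\<Sum>b\<in>T. scale (u b) b)"
proof -
  interpret vector_space scale by (rule vs)
  define P' where "P' = I \<inter> e -` T"
  have injI: "inj_on e I" using inj unfolding e_def I_def .
  have fP': "finite P'" unfolding P'_def using finite_vimage_IntI[OF T(1) injI] by (simp add: Int_commute)
  have sub: "{(s', j). \<exists>l\<in>{1..r}. s' \<in> S l \<and> j < l \<and> c s' j \<noteq> 0} \<subseteq> P'"
    unfolding P'_def c_def by (auto split: if_splits)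
  show "finite {(s', j). \<exists>l\<in>{1..r}. s' \<in> S l \<and> j < l \<and> c s' j \<noteq> 0}"
    using finite_subset[OF sub fP'] .
  define A where "A l = {s'\<in>S l. \<exists>j<l. c s' j \<noteq> 0}" for l
  define F where "F p = scale (c (fst p) (snd p)) (e p)" for p
  have Afin: "finite (A l)" for l
  proof -
    have "A l \<subseteq> fst ` P'" unfolding A_def P'_def c_def by (force split: if_splits)
    then show ?thesis using fP' finite_subset by blast
  qed
  have step1: "(\<Sum>s'\<in>A l. \<Sum>j<l. scale (c s' j) ((\<phi> ^^ j) (v s'))) = (\<Sum>p\<in>A l \<times> {..<l}. F p)" for l
    unfolding F_def e_def by (simp add: sum.cartesian_product case_prod_beta)
  have step2: "(\<Sum>l\<in>{1..r}. \<Sum>p\<in>A l \<times> {..<l}. F p) = (\<Sum>p\<in>(\<Union>l\<in>{1..r}. A l \<times> {..<l}). F p)"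
    by (rule sum.UNION_disjoint[symmetric]) (use Afin disj in \<open>auto simp: A_def\<close>)
  define Q where "Q = (\<Union>l\<in>{1..r}. A l \<times> {..<l})"
  have Qfin: "finite Q" unfolding Q_def using Afin by auto
  have "(\<Sum>p\<in>Q. F p) = (\<Sum>p\<in>Q \<union> P'. F p)"
  proof (rule sum.mono_neutral_left)
    show "\<forall>i\<in>Q \<union> P' - Q. F i = 0"
    proof
      fix p assume p: "p \<in> Q \<union> P' - Q"
      obtain s j where pe: "p = (s, j)" by force
      have "c s j = 0"
      proof (rule ccontr)
        assume nz: "c s j \<noteq> 0"
        from p pe obtain h where "h \<in> {1..r}" "s \<in> S h" "j < h" unfolding P'_def I_def by auto
        then have "p \<in> Q" using nz pe unfolding Q_def A_def by auto
        then show False using p by auto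
      qed
      then show "F p = 0" unfolding F_def pe by simp
    qed
  qed (use Qfin fP' in auto)
  also have "\<dots> = (\<Sum>p\<in>P'. F p)"
  proof (rule sum.mono_neutral_right)
    show "\<forall>i\<in>Q \<union> P' - P'. F i = 0"
      unfolding F_def c_def P'_def by auto
  qed (use Qfin fP' in auto)
  also have "\<dots> = (\<Sum>p\<in>P'. scale (u (e p)) (e p))"
    by (rule sum.cong) (auto simp: F_def c_def P'_def)
  also have "\<dots> = (\<Sum>b\<in>e ` P'. scale (u b) b)"
    by (rule sum.reindex[symmetric, unfolded comp_def]) (use injI in \<open>auto simp: P'_def intro: inj_on_subset\<close>)
  also have "e ` P' = T" unfolding P'_def using T(2) by auto
  finally have "(\<Sum>p\<in>Q. F p) = (\<Sum>b\<in>T. scale (u b) b)" .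
  then show "(\<Sum>l\<in>{1..r}. \<Sum>s'\<in>{s'\<in>S l. \<exists>j<l. c s' j \<noteq> 0}. \<Sum>j<l. scale (c s' j) ((\<phi> ^^ j) (v s')))
         = (\<Sum>b\<in>T. scale (u b) b)"
    using step1 step2 unfolding Q_def A_def by simp
qed

lemma ht_eq: "t \<in> {1..r} \<Longrightarrow> s \<in> S t \<Longrightarrow> (THE t. t \<in> {1..r} \<and> s \<in> S t) = t"
proof (rule the_equality)
  assume a: "t \<in> {1..r}" "s \<in> S t"
  then show "t \<in> {1..r} \<and> s \<in> S t" by simp
  fix t' assume "t' \<in> {1..r} \<and> s \<in> S t'"
  then show "t' = t" using ht_unique[of t' t s] a by blast
qed

lemma lam_sum:
  fixes T :: "'v set" and u :: "'v \<Rightarrow> 'k"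
  defines "e \<equiv> (\<lambda>(s, j). (\<phi> ^^ j) (v s))"
  defines "ht \<equiv> (\<lambda>s'. THE t. t \<in> {1..r} \<and> s' \<in> S t)"
  defines "d \<equiv> (\<lambda>s'. if (\<exists>t\<in>{1..r}. s' \<in> S t \<and> e (s', t - 1) \<in> T) then u (e (s', ht s' - 1)) else 0)"
  assumes T: "finite T" "T \<subseteq> {e (s', t - 1) | s' t. t \<in> {1..r} \<and> s' \<in> S t}"
  shows "finite {s'. \<exists>t\<in>{1..r}. s' \<in> S t \<and> d s' \<noteq> 0}"
    and "(\<Sum>t\<in>{1..r}. \<Sum>s'\<in>{s'\<in>S t. d s' \<noteq> 0}. scale (d s') ((\<phi> ^^ (t - 1)) (v s')))
         = (\<Sum>b\<in>T. scale (u b) b)"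
proof -
  interpret vector_space scale by (rule vs)
  define \<tau> where "\<tau> s' = e (s', ht s' - 1)" for s'
  define D where "D t = {s'\<in>S t. d s' \<noteq> 0}" for t
  have htD: "t \<in> {1..r} \<Longrightarrow> s' \<in> S t \<Longrightarrow> ht s' = t" for t s' unfolding ht_def by (rule ht_eq)
  define Dall where "Dall = {s'. \<exists>t\<in>{1..r}. s' \<in> S t \<and> d s' \<noteq> 0}"
  have dnz: "s' \<in> S t \<Longrightarrow> t \<in> {1..r} \<Longrightarrow> d s' \<noteq> 0 \<Longrightarrow> \<tau> s' \<in> T \<and> d s' = u (\<tau> s')" for s' t
  proof -
    assume a: "s' \<in> S t" "t \<in> {1..r}" "d s' \<noteq> 0"
    have c: "\<exists>t\<in>{1..r}. s' \<in> S t \<and> e (s', t - 1) \<in> T"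
    proof (rule ccontr)
      assume n: "\<not> (\<exists>t\<in>{1..r}. s' \<in> S t \<and> e (s', t - 1) \<in> T)"
      have "d s' = 0" unfolding d_def by (rule if_not_P[OF n])
      then show False using a(3) by simp
    qed
    then obtain t' where t': "t' \<in> {1..r}" "s' \<in> S t'" "e (s', t' - 1) \<in> T" by blast
    have "d s' = u (\<tau> s')" unfolding d_def \<tau>_def using c by simp
    moreover have "\<tau> s' = e (s', t' - 1)" unfolding \<tau>_def using htD[OF t'(1,2)] by simp
    ultimately show ?thesis using t'(3) by simp
  qed
  have inj\<tau>: "inj_on \<tau> Dall"
  proof
    fix x y assume x: "x \<in> Dall" and y: "y \<in> Dall" and eq: "\<tau> x = \<tau> y"
    from x obtain tx where tx: "tx \<in> {1..r}" "x \<in> S tx" unfolding Dall_def by auto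
    from y obtain ty where ty: "ty \<in> {1..r}" "y \<in> S ty" unfolding Dall_def by auto
    have "(\<phi> ^^ (tx - 1)) (v x) = (\<phi> ^^ (ty - 1)) (v y)"
      using eq htD[OF tx] htD[OF ty] unfolding \<tau>_def e_def by simp
    from e_eq[OF this tx(1,2) _ ty(1,2)] tx ty show "x = y" by auto
  qed
  have \<tau>T: "\<tau> ` Dall \<subseteq> T" unfolding Dall_def using dnz by auto
  have finD: "finite Dall" using finite_imageD[OF finite_subset[OF \<tau>T T(1)] inj\<tau>] .
  then show "finite {s'. \<exists>t\<in>{1..r}. s' \<in> S t \<and> d s' \<noteq> 0}" unfolding Dall_def .
  have inner: "(\<Sum>s'\<in>{s'\<in>S t. d s' \<noteq> 0}. scale (d s') ((\<phi> ^^ (t - 1)) (v s')))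
      = (\<Sum>s'\<in>D t. scale (u (\<tau> s')) (\<tau> s'))" if t: "t \<in> {1..r}" for t
  proof (rule sum.cong)
    show "{s'\<in>S t. d s' \<noteq> 0} = D t" by (simp add: D_def)
    fix s' assume s': "s' \<in> D t"
    then have "\<tau> s' = (\<phi> ^^ (t - 1)) (v s')" using htD t unfolding \<tau>_def e_def D_def by auto
    then show "scale (d s') ((\<phi> ^^ (t - 1)) (v s')) = scale (u (\<tau> s')) (\<tau> s')"
      using dnz[of s' t] t s' unfolding D_def by auto
  qed
  have finDt: "finite (D i)" for i
  proof -
    have "D i \<subseteq> Dall" unfolding D_def Dall_def d_def by (auto split: if_splits)
    then show ?thesis using finD finite_subset by blast
  qed
  have disjD: "\<forall>i\<in>{1..r}. \<forall>j\<in>{1..r}. i \<noteq> j \<longrightarrow> D i \<inter> D j = {}"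
    using disj unfolding D_def by blast
  have UD: "(\<Union>t\<in>{1..r}. D t) = Dall" unfolding D_def Dall_def by auto
  have "(\<Sum>t\<in>{1..r}. \<Sum>s'\<in>{s'\<in>S t. d s' \<noteq> 0}. scale (d s') ((\<phi> ^^ (t - 1)) (v s')))
      = (\<Sum>t\<in>{1..r}. \<Sum>s'\<in>D t. scale (u (\<tau> s')) (\<tau> s'))"
    using inner by (rule sum.cong[OF refl])
  also have "\<dots> = (\<Sum>s'\<in>(\<Union>t\<in>{1..r}. D t). scale (u (\<tau> s')) (\<tau> s'))"
    by (rule sum.UNION_disjoint[symmetric]) (use finDt disjD in auto)
  also have "\<dots> = (\<Sum>s'\<in>Dall. scale (u (\<tau> s')) (\<tau> s'))" unfolding UD ..
  also have "\<dots> = (\<Sum>b\<in>\<tau> ` Dall. scale (u b) b)"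
    by (rule sum.reindex[symmetric, unfolded comp_def]) (rule inj\<tau>)
  also have "\<dots> = (\<Sum>b\<in>T. scale (u b) b)"
  proof (rule sum.mono_neutral_left[OF T(1) \<tau>T])
    show "\<forall>b\<in>T - \<tau> ` Dall. scale (u b) b = 0"
    proof
      fix b assume b: "b \<in> T - \<tau> ` Dall"
      then obtain s' t where st: "t \<in> {1..r}" "s' \<in> S t" "b = e (s', t - 1)" using T(2) by blast
      have "u b = 0"
      proof (rule ccontr)
        assume nz: "u b \<noteq> 0"
        have "\<tau> s' = b" using st htD unfolding \<tau>_def by auto
        have "d s' = u (\<tau> s')" unfolding d_def \<tau>_def using st b by auto
        then have "d s' = u b" using \<open>\<tau> s' = b\<close> by simp
        then have "s' \<in> Dall" using nz st unfolding Dall_def by auto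
        then show False using b \<open>\<tau> s' = b\<close> by auto
      qed
      then show "scale (u b) b = 0" by simp
    qed
  qed
  finally show "(\<Sum>t\<in>{1..r}. \<Sum>s'\<in>{s'\<in>S t. d s' \<noteq> 0}. scale (d s') ((\<phi> ^^ (t - 1)) (v s')))
         = (\<Sum>b\<in>T. scale (u b) b)" .
qed

lemma ker_top:
  fixes w :: 'v
  defines "I \<equiv> {(s, j). \<exists>h\<in>{1..r}. s \<in> S h \<and> j < h}"
  defines "e \<equiv> (\<lambda>(s, j). (\<phi> ^^ j) (v s))"
  assumes lin: "Vector_Spaces.linear scale scale \<phi>"
    and vU0: "\<forall>h\<in>{1..r}. \<forall>s\<in>S h. (\<phi> ^^ h) (v s) = 0"
    and indep: "\<not> module.dependent scale (e ` I)"
    and w: "w \<in> module.span scale (e ` I)" and kw: "\<phi> w = 0"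
  obtains T u where "finite T" "T \<subseteq> {e (s', t - 1) | s' t. t \<in> {1..r} \<and> s' \<in> S t}"
    "w = (\<Sum>b\<in>T. scale (u b) b)"
proof -
  interpret vector_space scale by (rule vs)
  interpret L: Vector_Spaces.linear scale scale \<phi> by (rule lin)
  from w obtain T0 u where T0: "finite T0" "T0 \<subseteq> e ` I" and wT: "w = (\<Sum>b\<in>T0. scale (u b) b)"
    unfolding span_explicit by blast
  define Top where "Top = {e (s', t - 1) | s' t. t \<in> {1..r} \<and> s' \<in> S t}"
  define N where "N = T0 - Top"
  have phiTop: "\<phi> b = 0" if "b \<in> Top" for b
  proof -
    from that obtain s' t where st: "t \<in> {1..r}" "s' \<in> S t" "b = e (s', t - 1)" unfolding Top_def by blast
    have "\<phi> b = (\<phi> ^^ Suc (t - 1)) (v s')" using st(3) unfolding e_def by simp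
    also have "Suc (t - 1) = t" using st(1) by simp
    finally show ?thesis using vU0 st by simp
  qed
  have phiN: "\<exists>s j h. h \<in> {1..r} \<and> s \<in> S h \<and> Suc j < h \<and> b = e (s, j) \<and> \<phi> b = e (s, Suc j)"
    if "b \<in> N" for b
  proof -
    from that T0(2) obtain s j h where sj: "h \<in> {1..r}" "s \<in> S h" "j < h" "b = e (s, j)" "b \<notin> Top"
      unfolding N_def I_def by auto
    have "j \<noteq> h - 1" using sj unfolding Top_def by blast
    then have "Suc j < h" using sj by auto
    moreover have "\<phi> b = e (s, Suc j)" using sj(4) unfolding e_def by simp
    ultimately show ?thesis using sj by blast
  qed
  have injN: "inj_on \<phi> N"
  proof
    fix x y assume x: "x \<in> N" and y: "y \<in> N" and eq: "\<phi> x = \<phi> y"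
    from phiN[OF x] obtain s1 j1 h1 where a: "h1 \<in> {1..r}" "s1 \<in> S h1" "Suc j1 < h1" "x = e (s1, j1)" "\<phi> x = e (s1, Suc j1)" by blast
    from phiN[OF y] obtain s2 j2 h2 where b: "h2 \<in> {1..r}" "s2 \<in> S h2" "Suc j2 < h2" "y = e (s2, j2)" "\<phi> y = e (s2, Suc j2)" by blast
    have "(\<phi> ^^ Suc j1) (v s1) = (\<phi> ^^ Suc j2) (v s2)" using eq a b unfolding e_def by simp
    from e_eq[OF this a(1,2,3) b(1,2,3)] a b show "x = y" by simp
  qed
  have phiNI: "\<phi> ` N \<subseteq> e ` I"
  proof
    fix y assume "y \<in> \<phi> ` N"
    then obtain b where b: "b \<in> N" "y = \<phi> b" by blast
    from phiN[OF b(1)] obtain s j h where "h \<in> {1..r}" "s \<in> S h" "Suc j < h" "\<phi> b = e (s, Suc j)" by blast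
    then show "y \<in> e ` I" using b unfolding I_def by blast
  qed
  have finN: "finite N" using T0(1) unfolding N_def by simp
  have "0 = \<phi> w" using kw by simp
  also have "\<dots> = (\<Sum>b\<in>T0. scale (u b) (\<phi> b))" unfolding wT by (simp add: L.sum L.scale)
  also have "\<dots> = (\<Sum>b\<in>N. scale (u b) (\<phi> b))"
  proof (rule sum.mono_neutral_right)
    show "\<forall>i\<in>T0 - N. scale (u i) (\<phi> i) = 0"
    proof
      fix i assume "i \<in> T0 - N"
      then have "\<phi> i = 0" using phiTop unfolding N_def by blast
      then show "scale (u i) (\<phi> i) = 0" by simp
    qed
  qed (use T0(1) in \<open>auto simp: N_def\<close>)
  also have "\<dots> = (\<Sum>y\<in>\<phi> ` N. scale (u (inv_into N \<phi> y)) y)"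
    by (subst sum.reindex[OF injN]) (simp add: inv_into_f_f[OF injN])
  finally have z: "(\<Sum>y\<in>\<phi> ` N. scale (u (inv_into N \<phi> y)) y) = 0" by simp
  have uN: "u b = 0" if "b \<in> N" for b
  proof -
    have "u (inv_into N \<phi> (\<phi> b)) = 0"
      by (rule independentD[OF indep _ phiNI z]) (use finN that in auto)
    then show ?thesis using inv_into_f_f[OF injN that] by simp
  qed
  have "w = (\<Sum>b\<in>T0 \<inter> Top. scale (u b) b)"
    unfolding wT by (rule sum.mono_neutral_right) (use T0(1) uN in \<open>auto simp: N_def\<close>)
  then show ?thesis using that[of "T0 \<inter> Top" u] T0(1) unfolding Top_def by auto
qed

end

theorem corollary3p11:
  fixes scale :: "'k::field \<Rightarrow> 'v::ab_group_add \<Rightarrow> 'v"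
    and \<phi> :: "'v \<Rightarrow> 'v"
    and r :: nat
    and S :: "nat \<Rightarrow> 'i set"
    and v :: "'i \<Rightarrow> 'v"
  assumes vs: "vector_space scale"
    and fp: "finite_potent scale \<phi>"
    and idx: "ast_index \<phi> = r"
    and disj: "\<forall>h1\<in>{1..r}. \<forall>h2\<in>{1..r}. h1 \<noteq> h2 \<longrightarrow> S h1 \<inter> S h2 = {}"
    and vU: "\<forall>h\<in>{1..r}. \<forall>s\<in>S h. v s \<in> U_part \<phi> \<and> (\<phi> ^^ h) (v s) = 0"
    and inj: "inj_on (\<lambda>(s, j). (\<phi> ^^ j) (v s)) {(s, j). \<exists>h\<in>{1..r}. s \<in> S h \<and> j < h}"
    and indep: "\<not> module.dependent scale
                   ((\<lambda>(s, j). (\<phi> ^^ j) (v s)) ` {(s, j). \<exists>h\<in>{1..r}. s \<in> S h \<and> j < h})"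
    and spans: "module.span scale
                   ((\<lambda>(s, j). (\<phi> ^^ j) (v s)) ` {(s, j). \<exists>h\<in>{1..r}. s \<in> S h \<and> j < h})
                 = U_part \<phi>"
  shows "(\<forall>g. endo_on scale (U_part \<phi>) g \<longrightarrow>
            (gen_inverse_on (U_part \<phi>) \<phi> g \<longleftrightarrow>
              (\<exists>lam alpha. admissible_scalars r S lam alpha \<and>
                           jordan_ginv_formula scale \<phi> r S v lam alpha g)))
       \<and> (\<forall>lam alpha. admissible_scalars r S lam alpha \<longrightarrow>
            (\<exists>g. endo_on scale (U_part \<phi>) g \<and> jordan_ginv_formula scale \<phi> r S v lam alpha g))"
proof -
  interpret vector_space scale by (rule vs)
  have lin: "Vector_Spaces.linear scale scale \<phi>" using fp unfolding finite_potent_def by blast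
  interpret L: Vector_Spaces.linear scale scale \<phi> by (rule lin)
  define I where "I = {(s, j). \<exists>h\<in>{1..r}. s \<in> S h \<and> j < h}"
  define e where "e = (\<lambda>(s, j). (\<phi> ^^ j) (v s))"
  define B where "B = e ` I"
  define U where "U = U_part \<phi>"
  define AS where "AS c = (\<Sum>l\<in>{1..r}. \<Sum>s'\<in>{s'\<in>S l. \<exists>j<l. c s' j \<noteq> 0}. \<Sum>j<l.
                scale (c s' j) ((\<phi> ^^ j) (v s')))" for c :: "'i \<Rightarrow> nat \<Rightarrow> 'k"
  define LS where "LS d = (\<Sum>t\<in>{1..r}. \<Sum>s'\<in>{s'\<in>S t. d s' \<noteq> 0}.
                scale (d s') ((\<phi> ^^ (t - 1)) (v s')))" for d :: "'i \<Rightarrow> 'k"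
  have formula_iff: "jordan_ginv_formula scale \<phi> r S v lam alpha g \<longleftrightarrow>
     (\<forall>h\<in>{1..r}. \<forall>s\<in>S h. (\<forall>i\<in>{1..h-1}. g ((\<phi> ^^ i) (v s)) = (\<phi> ^^ (i - 1)) (v s) + LS (lam i s))
        \<and> g (v s) = AS (alpha s))" for lam alpha g
    unfolding jordan_ginv_formula_def AS_def LS_def by simp
  have UB: "U = span B" using spans unfolding U_def B_def e_def I_def by simp
  have subU: "subspace U" using UB by simp
  have eI: "e p \<in> U" if "p \<in> I" for p using that UB B_def span_base by blast
  have vU0: "\<forall>h\<in>{1..r}. \<forall>s\<in>S h. (\<phi> ^^ h) (v s) = 0" using vU by blast
  have phiU: "\<phi> x \<in> U" if "x \<in> U" for x
  proof -
    from that obtain m where "(\<phi> ^^ m) x = 0" unfolding U_def U_part_def by blast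
    then have "(\<phi> ^^ m) (\<phi> x) = 0" by (metis funpow_swap1 L.zero)
    then show ?thesis unfolding U_def U_part_def by blast
  qed
  have indB: "independent B" using indep unfolding B_def e_def I_def .
  have LS_U: "LS d \<in> U" for d
    unfolding LS_def UB B_def
  proof (intro span_sum span_scale span_base)
    fix t s' assume "t \<in> {1..r}" "s' \<in> {s' \<in> S t. d s' \<noteq> 0}"
    then have "(s', t - 1) \<in> I" unfolding I_def by auto
    then show "(\<phi> ^^ (t - 1)) (v s') \<in> e ` I" unfolding e_def by force
  qed
  have AS_U: "AS c \<in> U" for c
    unfolding AS_def UB B_def
  proof (intro span_sum span_scale span_base)
    fix l s' j assume "l \<in> {1..r}" "s' \<in> {s' \<in> S l. \<exists>j<l. c s' j \<noteq> 0}" "j \<in> {..<l}"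
    then have "(s', j) \<in> I" unfolding I_def by auto
    then show "(\<phi> ^^ j) (v s') \<in> e ` I" unfolding e_def by force
  qed
  have LS_ker: "\<phi> (LS d) = 0" for d
  proof -
    have "\<phi> ((\<phi> ^^ (t - 1)) (v s')) = 0" if "t \<in> {1..r}" "s' \<in> S t" for t s'
    proof -
      have "\<phi> ((\<phi> ^^ (t - 1)) (v s')) = (\<phi> ^^ Suc (t - 1)) (v s')" by simp
      also have "Suc (t - 1) = t" using that by simp
      finally show ?thesis using vU0 that by simp
    qed
    then show ?thesis unfolding LS_def by (simp add: L.sum L.scale)
  qed
  show ?thesis
  proof (intro conjI allI impI)
    fix g assume endo: "endo_on scale (U_part \<phi>) g"
    have gU: "g x \<in> U" if "x \<in> U" for x using endo that unfolding endo_on_def U_def by blast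
    have gadd: "g (x + y) = g x + g y" if "x \<in> U" "y \<in> U" for x y
      using endo that unfolding endo_on_def U_def by blast
    have gscale: "g (scale c x) = scale c (g x)" if "x \<in> U" for c x
      using endo that unfolding endo_on_def U_def by blast
    have g0: "g 0 = 0"
    proof -
      have "g (scale 0 0) = scale 0 (g 0)" using gscale subU subspace_0 by blast
      then show ?thesis by simp
    qed
    show "gen_inverse_on (U_part \<phi>) \<phi> g \<longleftrightarrow>
        (\<exists>lam alpha. admissible_scalars r S lam alpha \<and> jordan_ginv_formula scale \<phi> r S v lam alpha g)"
    proof
      assume gi: "gen_inverse_on (U_part \<phi>) \<phi> g"
      have "\<forall>s. \<exists>c. finite {(s', j). \<exists>l\<in>{1..r}. s' \<in> S l \<and> j < l \<and> c s' j \<noteq> 0} \<and>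
              ((\<exists>h\<in>{1..r}. s \<in> S h) \<longrightarrow> g (v s) = AS c)"
      proof
        fix s
        show "\<exists>c. finite {(s', j). \<exists>l\<in>{1..r}. s' \<in> S l \<and> j < l \<and> c s' j \<noteq> 0} \<and>
              ((\<exists>h\<in>{1..r}. s \<in> S h) \<longrightarrow> g (v s) = AS c)"
        proof (cases "\<exists>h\<in>{1..r}. s \<in> S h")
          case True
          then have "v s \<in> U" using vU unfolding U_def by blast
          then have "g (v s) \<in> span B" using gU UB by blast
          then obtain T u where T: "finite T" "T \<subseteq> B" "g (v s) = (\<Sum>b\<in>T. scale (u b) b)"
            unfolding span_explicit by blast
          note A = alpha_sum[where u=u, OF vs disj inj T(1) T(2)[unfolded B_def e_def I_def]]
          show ?thesis
            by (rule exI, rule conjI, rule A(1)) (use A(2) T(3) in \<open>simp add: AS_def\<close>)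
        next
          case False
          show ?thesis by (rule exI[of _ "\<lambda>_ _. 0"]) (use False in simp)
        qed
      qed
      from choice[OF this] obtain alpha where alpha: "\<forall>s. finite {(s', j). \<exists>l\<in>{1..r}. s' \<in> S l \<and> j < l \<and> alpha s s' j \<noteq> 0} \<and>
              ((\<exists>h\<in>{1..r}. s \<in> S h) \<longrightarrow> g (v s) = AS (alpha s))"
        by blast
      have "\<forall>p. \<exists>d. finite {s'. \<exists>t\<in>{1..r}. s' \<in> S t \<and> d s' \<noteq> 0} \<and>
              ((\<exists>h\<in>{1..r}. snd p \<in> S h \<and> fst p \<in> {1..h-1}) \<longrightarrow>
                g ((\<phi> ^^ fst p) (v (snd p))) = (\<phi> ^^ (fst p - 1)) (v (snd p)) + LS d)"
      proof
        fix p :: "nat \<times> 'i"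
        obtain i s where p: "p = (i, s)" by force
        show "\<exists>d. finite {s'. \<exists>t\<in>{1..r}. s' \<in> S t \<and> d s' \<noteq> 0} \<and>
              ((\<exists>h\<in>{1..r}. snd p \<in> S h \<and> fst p \<in> {1..h-1}) \<longrightarrow>
                g ((\<phi> ^^ fst p) (v (snd p))) = (\<phi> ^^ (fst p - 1)) (v (snd p)) + LS d)"
        proof (cases "\<exists>h\<in>{1..r}. s \<in> S h \<and> i \<in> {1..h-1}")
          case True
          then obtain h where h: "h \<in> {1..r}" "s \<in> S h" "i \<in> {1..h-1}" by blast
          define x where "x = e (s, i - 1)"
          have xI: "(s, i - 1) \<in> I" using h unfolding I_def by auto
          have xU: "x \<in> U" unfolding x_def by (rule eI[OF xI])
          have phix: "\<phi> x = (\<phi> ^^ i) (v s)"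
          proof -
            have "\<phi> x = (\<phi> ^^ Suc (i - 1)) (v s)" unfolding x_def e_def by simp
            also have "Suc (i - 1) = i" using h by simp
            finally show ?thesis .
          qed
          define w where "w = g ((\<phi> ^^ i) (v s)) - x"
          have wU: "w \<in> U" unfolding w_def using subspace_diff[OF subU gU[OF phiU[OF xU]] xU] phix by simp
          have kw: "\<phi> w = 0"
            using gi xU unfolding w_def gen_inverse_on_def U_def by (simp add: L.diff phix[symmetric])
          obtain T u where T: "finite T" "T \<subseteq> {e (s', t - 1) | s' t. t \<in> {1..r} \<and> s' \<in> S t}"
            "w = (\<Sum>b\<in>T. scale (u b) b)"
            using ker_top[OF vs disj inj lin vU0 indep wU[unfolded UB B_def e_def I_def] kw]
            unfolding e_def by blast
          note A = lam_sum[where u=u, OF vs disj inj T(1) T(2)[unfolded e_def]]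
          have "\<exists>d. finite {s'. \<exists>t\<in>{1..r}. s' \<in> S t \<and> d s' \<noteq> 0} \<and> w = LS d"
            unfolding LS_def T(3) by (rule exI, rule conjI, rule A(1), rule A(2)[symmetric])
          then obtain d where d: "finite {s'. \<exists>t\<in>{1..r}. s' \<in> S t \<and> d s' \<noteq> 0}" "w = LS d" by blast
          have "g ((\<phi> ^^ i) (v s)) = x + w" unfolding w_def by simp
          then have "g ((\<phi> ^^ fst p) (v (snd p))) = (\<phi> ^^ (fst p - 1)) (v (snd p)) + LS d"
            unfolding p x_def e_def d(2) by simp
          then show ?thesis using d(1) by blast
        next
          case False
          show ?thesis
          proof (rule exI[of _ "\<lambda>_. 0"], rule conjI)
            show "(\<exists>h\<in>{1..r}. snd p \<in> S h \<and> fst p \<in> {1..h-1}) \<longrightarrow>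
                g ((\<phi> ^^ fst p) (v (snd p))) = (\<phi> ^^ (fst p - 1)) (v (snd p)) + LS (\<lambda>_. 0)"
              using False p by auto
          qed simp
        qed
      qed
      from choice[OF this] obtain L where L: "\<forall>p. finite {s'. \<exists>t\<in>{1..r}. s' \<in> S t \<and> L p s' \<noteq> 0} \<and>
              ((\<exists>h\<in>{1..r}. snd p \<in> S h \<and> fst p \<in> {1..h-1}) \<longrightarrow>
                g ((\<phi> ^^ fst p) (v (snd p))) = (\<phi> ^^ (fst p - 1)) (v (snd p)) + LS (L p))"
        by blast
      show "\<exists>lam alpha. admissible_scalars r S lam alpha \<and> jordan_ginv_formula scale \<phi> r S v lam alpha g"
      proof (intro exI conjI)
        show "admissible_scalars r S (\<lambda>i s. L (i, s)) alpha"
          unfolding admissible_scalars_def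
        proof (intro conjI ballI)
          fix h s i assume "h \<in> {1..r}" "s \<in> S h" "i \<in> {1..h-1}"
          show "finite {s'. \<exists>t\<in>{1..r}. s' \<in> S t \<and> L (i, s) s' \<noteq> 0}"
            using spec[OF L, of "(i, s)"] by simp
        next
          fix h s assume "h \<in> {1..r}" "s \<in> S h"
          show "finite {(s', j). \<exists>l\<in>{1..r}. s' \<in> S l \<and> j < l \<and> alpha s s' j \<noteq> 0}"
            using spec[OF alpha, of s] by simp
        qed
        show "jordan_ginv_formula scale \<phi> r S v (\<lambda>i s. L (i, s)) alpha g"
          unfolding formula_iff
        proof (intro ballI conjI)
          fix h s i assume "h \<in> {1..r}" "s \<in> S h" "i \<in> {1..h-1}"
          then have "\<exists>h\<in>{1..r}. s \<in> S h \<and> i \<in> {1..h-1}" by blast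
          then show "g ((\<phi> ^^ i) (v s)) = (\<phi> ^^ (i - 1)) (v s) + LS (L (i, s))"
            using spec[OF L, of "(i, s)"] by simp
        next
          fix h s assume "h \<in> {1..r}" "s \<in> S h"
          then have "\<exists>h\<in>{1..r}. s \<in> S h" by blast
          then show "g (v s) = AS (alpha s)" using spec[OF alpha, of s] by simp
        qed
      qed
    next
      assume "\<exists>lam alpha. admissible_scalars r S lam alpha \<and> jordan_ginv_formula scale \<phi> r S v lam alpha g"
      then obtain lam alpha where F: "jordan_ginv_formula scale \<phi> r S v lam alpha g" by blast
      note F' = F[unfolded formula_iff]
      define P where "P = {x. x \<in> U \<and> \<phi> (g (\<phi> x)) = \<phi> x}"
      have subP: "subspace P"
      proof (rule subspaceI)
        show "0 \<in> P" unfolding P_def using subspace_0[OF subU] g0 by simp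
      next
        fix x y assume "x \<in> P" "y \<in> P"
        then show "x + y \<in> P" unfolding P_def
          using subspace_add[OF subU] phiU gU by (simp add: L.add gadd)
      next
        fix c x assume "x \<in> P"
        then show "scale c x \<in> P" unfolding P_def
          using subspace_scale[OF subU] phiU gU by (simp add: L.scale gscale)
      qed
      have BP: "B \<subseteq> P"
      proof
        fix b assume "b \<in> B"
        then obtain s j h where sj: "h \<in> {1..r}" "s \<in> S h" "j < h" "b = e (s, j)"
          unfolding B_def I_def by blast
        have bU: "b \<in> U" using eI sj unfolding I_def by blast
        have "\<phi> (g (\<phi> b)) = \<phi> b"
        proof (cases "Suc j < h")
          case True
          then have "Suc j \<in> {1..h-1}" by simp
          then have "g ((\<phi> ^^ Suc j) (v s)) = (\<phi> ^^ (Suc j - 1)) (v s) + LS (lam (Suc j) s)"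
            using F' sj(1,2) by blast
          then have "g ((\<phi> ^^ Suc j) (v s)) = (\<phi> ^^ j) (v s) + LS (lam (Suc j) s)" by simp
          then show ?thesis using sj(4) LS_ker unfolding e_def by (simp add: L.add)
        next
          case False
          then have "Suc j = h" using sj by simp
          have "\<phi> b = (\<phi> ^^ Suc j) (v s)" using sj(4) unfolding e_def by simp
          then have "\<phi> b = 0" using vU0 sj(1,2) \<open>Suc j = h\<close> by simp
          then show ?thesis using g0 by simp
        qed
        then show "b \<in> P" unfolding P_def using bU by blast
      qed
      have "U \<subseteq> P" unfolding UB by (rule span_minimal[OF BP subP])
      then show "gen_inverse_on (U_part \<phi>) \<phi> g"
        unfolding gen_inverse_on_def P_def U_def by blast
    qed
  next
    fix lam alpha
    interpret P: vector_space_pair scale scale by (intro vector_space_pair.intro vs)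
    define val where "val s i = (if i = 0 then AS (alpha s) else (\<phi> ^^ (i - 1)) (v s) + LS (lam i s))" for s i
    define f where "f x = (case inv_into I e x of (s, i) \<Rightarrow> val s i)" for x
    define g where "g = P.construct B f"
    have injI: "inj_on e I" using inj unfolding e_def I_def .
    have gb: "g (e p) = (case p of (s, i) \<Rightarrow> val s i)" if "p \<in> I" for p
    proof -
      have "g (e p) = f (e p)" unfolding g_def using P.construct_basis[OF indB] that B_def by blast
      then show ?thesis unfolding f_def using inv_into_f_f[OF injI that] by simp
    qed
    have valU: "val s i \<in> U" if "(s, i) \<in> I" for s i
    proof (cases "i = 0")
      case False
      then have "(s, i - 1) \<in> I" using that unfolding I_def by auto
      then have "(\<phi> ^^ (i - 1)) (v s) \<in> U" using eI unfolding e_def by auto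
      then show ?thesis unfolding val_def using False subspace_add[OF subU _ LS_U] by simp
    qed (simp add: val_def AS_U)
    have fB: "f ` B \<subseteq> U"
    proof
      fix y assume "y \<in> f ` B"
      then obtain p where p: "p \<in> I" "y = f (e p)" unfolding B_def by blast
      then show "y \<in> U" unfolding f_def using inv_into_f_f[OF injI p(1)] valU by (cases p) auto
    qed
    interpret G: Vector_Spaces.linear scale scale g unfolding g_def by (rule P.linear_construct[OF indB])
    show "\<exists>g. endo_on scale (U_part \<phi>) g \<and> jordan_ginv_formula scale \<phi> r S v lam alpha g"
    proof (intro exI conjI)
      show "endo_on scale (U_part \<phi>) g"
        unfolding endo_on_def
      proof (intro conjI ballI allI subsetI)
        fix y assume "y \<in> g ` U_part \<phi>"
        then obtain x where "y = g x" by blast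
        then have "y \<in> span (f ` B)" unfolding g_def using P.construct_in_span[OF indB] by simp
        then show "y \<in> U_part \<phi>" using span_minimal[OF fB subU] unfolding U_def by blast
      qed (simp_all add: G.add G.scale)
      show "jordan_ginv_formula scale \<phi> r S v lam alpha g"
        unfolding formula_iff
      proof (intro ballI conjI)
        fix h s i assume h: "h \<in> {1..r}" "s \<in> S h" "i \<in> {1..h-1}"
        then have "(s, i) \<in> I" unfolding I_def by auto
        from gb[OF this] h show "g ((\<phi> ^^ i) (v s)) = (\<phi> ^^ (i - 1)) (v s) + LS (lam i s)"
          unfolding e_def val_def by simp
      next
        fix h s assume h: "h \<in> {1..r}" "s \<in> S h"
        then have "(s, 0) \<in> I" unfolding I_def by auto
        from gb[OF this] show "g (v s) = AS (alpha s)" unfolding e_def val_def by simp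
      qed
    qed
  qed
qed

end
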